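(* Let $F$ be a Ferrers diagram, $T\in\mathsf{EWtab}(F)$ and $S$ the supplementary tableau to $T$. Let $j\in\mathsf{rows}(F)$ and $k\in\mathsf{cols}(F)$ with $j>k$. Then $S_{jk}=0$ if and only if there exists $k'\in\mathsf{cols}(F)$ with $k'>j$ such that $T_{jk'}=0$ and, for all $j'\in\mathsf{rows}(F)$ with $j'<k$, if $T_{j'k'}=0$ then $T_{j'k}=0$. Otherwise $S_{jk}=1$.
   Context: Ferrers diagrams and graphs: a Ferrers diagram $F$ (English convention) of semiperimeter $n+1$ has rows and columns labeled by $0,\ldots,n$: the $n+1$ unit steps of its south-east boundary path, traversed from top-right to bottom-left, are labeled $0,\ldots,n$; a vertical step labels the row it bounds, a horizontal step the column it bounds (top row labeled $0$). $\mathsf{rows}(F)$, $\mathsf{cols}(F)$ are the label sets; $F$ has a cell in row $i$, column $j$ iff $i<j$. $G(F)$ has vertex set $\{0,\ldots,n\}$ with edges $\{i,j\}$ for $i\in\mathsf{rows}(F)$, $j\in\mathsf{cols}(F)$, $i<j$. Sandpile model on $G(F)$ with sink $0$: configurations $c\in\mathbb{N}^n$; non-sink $v$ unstable if $c_v\ge\deg(v)$; toppling sends one grain to each neighbour (grains to $0$ disappear); toppling the sink adds one grain to each neighbour of $0$. Canonical toppling of a recurrent configuration $c$: topple the sink ($U^{(0)}_c=\{0\}$), then alternately topple simultaneously all unstable vertices in $\mathsf{cols}(F)$ ($V^{(1)}_c$), all unstable in $\mathsf{rows}(F)$ ($U^{(1)}_c$), etc.; $\mathsf{CanonTop}(c)=(U^{(0)}_c,V^{(1)}_c,U^{(1)}_c,\ldots)$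 is an ordered partition of $\{0,\ldots,n\}$. EW-tableaux: $0/1$-fillings $T$ of $F$ ($T_{ij}$ = entry in row $i$, column $j$) with top row all 1s, a 0 in every other row, and no rectangle with 0s in two diagonally opposite corners and 1s in the other two; $\mathsf{EWtab}(F)$ is their set. $\phi_{TC}(T)$ is the (recurrent) configuration with $c_i$ = number of 1s in row $i$ ($i\in\mathsf{rows}(F)$), $c_i$ = number of 0s in column $i$ ($i\in\mathsf{cols}(F)$). $\mathsf{CanonTop}(T):=\mathsf{CanonTop}(\phi_{TC}(T))$. Supplementary tableau $S=S(T)$: the rectangular $|\mathsf{rows}(F)|\times|\mathsf{cols}(F)|$ array with $S_{ij}=1$ if row label $i$ lies in an earlier block of $\mathsf{CanonTop}(T)$ than column label $j$, and $S_{ij}=0$ otherwise. *)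

theory Defs
  imports Main
begin

(* A Ferrers diagram of semiperimeter n+1 is encoded by n together with the set R
   of labels of its rows (vertical boundary steps); the remaining labels in {0..n}
   are the column labels.  The boundary path starts with a vertical step (top row
   labelled 0) and ends with a horizontal step (leftmost column labelled n). *)

definition cols :: "nat \<Rightarrow> nat set \<Rightarrow> nat set" where
  "cols n R = {0..n} - R"

definition ferrers :: "nat \<Rightarrow> nat set \<Rightarrow> bool" where
  "ferrers n R \<longleftrightarrow> R \<subseteq> {0..n} \<and> 0 \<in> R \<and> n \<notin> R"

definition is_cell :: "nat \<Rightarrow> nat set \<Rightarrow> nat \<Rightarrow> nat \<Rightarrow> bool" where
  "is_cell n R i j \<longleftrightarrow> i \<in> R \<and> j \<in> cols n R \<and> i < j"

definition adj :: "nat \<Rightarrow> nat set \<Rightarrow> nat \<Rightarrow> nat \<Rightarrow> bool" where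
  "adj n R u v \<longleftrightarrow> is_cell n R u v \<or> is_cell n R v u"

definition deg :: "nat \<Rightarrow> nat set \<Rightarrow> nat \<Rightarrow> nat" where
  "deg n R v = card {w \<in> {0..n}. adj n R v w}"

definition EWtab :: "nat \<Rightarrow> nat set \<Rightarrow> (nat \<Rightarrow> nat \<Rightarrow> nat) set" where
  "EWtab n R = {T.
     (\<forall>i j. is_cell n R i j \<longrightarrow> T i j \<in> {0, 1}) \<and>
     (\<forall>j. is_cell n R 0 j \<longrightarrow> T 0 j = 1) \<and>
     (\<forall>i \<in> R. i \<noteq> 0 \<longrightarrow> (\<exists>j. is_cell n R i j \<and> T i j = 0)) \<and>
     (\<forall>i i' j j'. i \<in> R \<longrightarrow> i' \<in> R \<longrightarrow> j \<in> cols n R \<longrightarrow> j' \<in> cols n R \<longrightarrow>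
        i < i' \<longrightarrow> j < j' \<longrightarrow> i' < j \<longrightarrow>
        \<not> (T i j = 0 \<and> T i' j' = 0 \<and> T i j' = 1 \<and> T i' j = 1) \<and>
        \<not> (T i j' = 0 \<and> T i' j = 0 \<and> T i j = 1 \<and> T i' j' = 1))}"

(* the configuration phi_TC(T) (meaningful on the non-sink vertices 1..n) *)
definition phiTC :: "nat \<Rightarrow> nat set \<Rightarrow> (nat \<Rightarrow> nat \<Rightarrow> nat) \<Rightarrow> nat \<Rightarrow> nat" where
  "phiTC n R T v =
     (if v \<in> R then card {j. is_cell n R v j \<and> T v j = 1}
      else card {i. is_cell n R i v \<and> T i v = 0})"

definition sink_topple :: "nat \<Rightarrow> nat set \<Rightarrow> (nat \<Rightarrow> nat) \<Rightarrow> nat \<Rightarrow> int" where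
  "sink_topple n R c = (\<lambda>v. int (c v) + (if adj n R 0 v then 1 else 0))"

definition unstable_block :: "nat \<Rightarrow> nat set \<Rightarrow> nat \<Rightarrow> (nat \<Rightarrow> int) \<Rightarrow> nat set" where
  "unstable_block n R t cf =
     {v \<in> {1..n}. (if odd t then v \<in> cols n R else v \<in> R) \<and> cf v \<ge> int (deg n R v)}"

definition topple_set :: "nat \<Rightarrow> nat set \<Rightarrow> nat set \<Rightarrow> (nat \<Rightarrow> int) \<Rightarrow> nat \<Rightarrow> int" where
  "topple_set n R B cf = (\<lambda>w. cf w - (if w \<in> B then int (deg n R w) else 0)
                              + int (card {v \<in> B. adj n R v w}))"

primrec ct_conf :: "nat \<Rightarrow> nat set \<Rightarrow> (nat \<Rightarrow> nat) \<Rightarrow> nat \<Rightarrow> nat \<Rightarrow> int" where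
  "ct_conf n R c 0 = sink_topple n R c"
| "ct_conf n R c (Suc t) =
     topple_set n R (unstable_block n R (Suc t) (ct_conf n R c t)) (ct_conf n R c t)"

(* the t-th block of CanonTop(c): block 0 = U^(0) = {0}, block 2k-1 = V^(k),
   block 2k = U^(k) *)
definition canon_block :: "nat \<Rightarrow> nat set \<Rightarrow> (nat \<Rightarrow> nat) \<Rightarrow> nat \<Rightarrow> nat set" where
  "canon_block n R c t =
     (if t = 0 then {0} else unstable_block n R t (ct_conf n R c (t - 1)))"

definition block_index :: "nat \<Rightarrow> nat set \<Rightarrow> (nat \<Rightarrow> nat) \<Rightarrow> nat \<Rightarrow> nat" where
  "block_index n R c v = (LEAST t. v \<in> canon_block n R c t)"

definition supp_tab :: "nat \<Rightarrow> nat set \<Rightarrow> (nat \<Rightarrow> nat \<Rightarrow> nat) \<Rightarrow> nat \<Rightarrow> nat \<Rightarrow> nat" where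
  "supp_tab n R T i j =
     (if block_index n R (phiTC n R T) i < block_index n R (phiTC n R T) j then 1 else 0)"

end

theory Submission
  imports Defs
begin


locale ewl =
  fixes n :: nat and R :: "nat set" and T :: "nat \<Rightarrow> nat \<Rightarrow> nat"
  assumes fer: "ferrers n R" and tab: "T \<in> EWtab n R"
begin

abbreviation cell where "cell i j \<equiv> is_cell n R i j"

lemma R_sub: "R \<subseteq> {0..n}" and R0: "0 \<in> R" and nR: "n \<notin> R"
  using fer by (auto simp: ferrers_def)

lemma cell_iff: "cell i j \<longleftrightarrow> i \<in> R \<and> j \<le> n \<and> j \<notin> R \<and> i < j"
  by (auto simp: is_cell_def cols_def)

lemma cols_iff: "k \<in> cols n R \<longleftrightarrow> k \<le> n \<and> k \<notin> R"
  by (auto simp: cols_def)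

lemma T01: "cell i j \<Longrightarrow> T i j = 0 \<or> T i j = 1"
  using tab by (auto simp: EWtab_def)

lemma Ttop: "cell 0 j \<Longrightarrow> T 0 j = 1"
  using tab by (auto simp: EWtab_def)

lemma rowzero: "i \<in> R \<Longrightarrow> i \<noteq> 0 \<Longrightarrow> \<exists>j. cell i j \<and> T i j = 0"
  using tab by (auto simp: EWtab_def)

lemma rect:
  assumes "i \<in> R" "i' \<in> R" "j \<in> cols n R" "j' \<in> cols n R" "i < i'" "j < j'" "i' < j"
  shows "\<not> (T i j = 0 \<and> T i' j' = 0 \<and> T i j' = 1 \<and> T i' j = 1)"
    and "\<not> (T i j' = 0 \<and> T i' j = 0 \<and> T i j = 1 \<and> T i' j' = 1)"
  using tab assms unfolding EWtab_def by blast+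

lemma adj_sym: "adj n R v w = adj n R w v"
  by (auto simp: adj_def)

lemma adj_col: "k \<in> cols n R \<Longrightarrow> adj n R v k \<longleftrightarrow> cell v k"
  by (auto simp: adj_def is_cell_def cols_def)

lemma adj_row: "j \<in> R \<Longrightarrow> adj n R v j \<longleftrightarrow> cell j v"
  by (auto simp: adj_def is_cell_def cols_def)

lemma fin_cell1: "finite {i. cell i k}"
  by (rule finite_subset[of _ "{0..n}"]) (auto simp: cell_iff)

lemma fin_cell2: "finite {k. cell j k}"
  by (rule finite_subset[of _ "{0..n}"]) (auto simp: cell_iff)

lemma deg_col: "k \<in> cols n R \<Longrightarrow> deg n R k = card {i. cell i k}"
  unfolding deg_def
  by (rule arg_cong[where f=card]) (auto simp: adj_sym[of k] adj_col cell_iff)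

lemma deg_row: "j \<in> R \<Longrightarrow> deg n R j = card {k. cell j k}"
  unfolding deg_def
  by (rule arg_cong[where f=card]) (auto simp: adj_sym[of j] adj_row cell_iff)

lemma phi_col: "k \<in> cols n R \<Longrightarrow> phiTC n R T k = card {i. cell i k \<and> T i k = 0}"
  by (auto simp: phiTC_def cols_def)

lemma phi_row: "j \<in> R \<Longrightarrow> phiTC n R T j = card {k. cell j k \<and> T j k = 1}"
  by (auto simp: phiTC_def)

lemma col_pos: "k \<in> cols n R \<Longrightarrow> 0 < k"
  using R0 by (cases k) (auto simp: cols_def)

lemma sink_col: "k \<in> cols n R \<Longrightarrow> sink_topple n R c k = int (c k) + 1"
  using R0 col_pos[of k] by (auto simp: sink_topple_def adj_col is_cell_def)

lemma sink_row: "j \<in> R \<Longrightarrow> sink_topple n R c j = int (c j)"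
  by (auto simp: sink_topple_def adj_row is_cell_def)

end

context ewl begin

definition cc where "cc = phiTC n R T"
definition blk where "blk t = canon_block n R cc t"
definition tp where "tp t = {v. \<exists>s\<le>t. v \<in> blk s}"
abbreviation cf where "cf t \<equiv> ct_conf n R cc t"

lemma blk0: "blk 0 = {0}" by (simp add: blk_def canon_block_def)
lemma blkSuc: "blk (Suc t) = unstable_block n R (Suc t) (cf t)"
  by (simp add: blk_def canon_block_def)
lemma tp0: "tp 0 = {0}" by (auto simp: tp_def blk0)
lemma tpSuc: "tp (Suc t) = tp t \<union> blk (Suc t)"
  by (auto simp: tp_def le_Suc_eq)
lemma blk_sub: "blk (Suc t) \<subseteq> {1..n}" by (auto simp: blkSuc unstable_block_def)
lemma blk_par: "v \<in> blk (Suc t) \<Longrightarrow> (odd (Suc t) \<longrightarrow> v \<in> cols n R) \<and> (even (Suc t) \<longrightarrow> v \<in> R)"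
  by (auto simp: blkSuc unstable_block_def)
lemma tp_sub: "tp t \<subseteq> {0..n}"
proof (induction t)
  case (Suc t) then show ?case using blk_sub[of t] by (auto simp: tpSuc)
qed (simp add: tp0)
lemma zero_tp: "0 \<in> tp t" by (auto simp: tp_def blk0)
lemma tp_mono: "s \<le> t \<Longrightarrow> tp s \<subseteq> tp t" unfolding tp_def using le_trans by blast
lemma fin_tp: "finite (tp t)" using tp_sub by (rule finite_subset) simp

definition INV where "INV t \<longleftrightarrow> (\<forall>i k. cell i k \<longrightarrow> T i k = 0 \<longrightarrow> k \<notin> tp t \<longrightarrow> i \<notin> tp t) \<and>
   (\<forall>i k. cell i k \<longrightarrow> T i k = 1 \<longrightarrow> i \<notin> tp t \<longrightarrow> k \<notin> tp t)"

definition FORM where "FORM t \<longleftrightarrow> (\<forall>w. cf t w = sink_topple n R cc w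
   - (if w \<in> tp t \<and> w \<noteq> 0 then int (deg n R w) else 0) + int (card {v \<in> tp t - {0}. adj n R v w}))"

lemma unstable_col:
  assumes I: "INV t" and F: "FORM t" and v: "v \<in> cols n R"
  shows "int (deg n R v) \<le> cf t v \<longleftrightarrow> v \<notin> tp t \<and> (\<forall>i. cell i v \<and> T i v = 1 \<longrightarrow> i \<in> tp t)"
proof -
  define A where "A = {i. cell i v}"
  define Z where "Z = {i. cell i v \<and> T i v = 0}"
  define On where "On = {i. cell i v \<and> T i v = 1}"
  have finA: "finite A" unfolding A_def by (rule fin_cell1)
  have ZA: "Z \<subseteq> A" and OA: "On \<subseteq> A" by (auto simp: A_def Z_def On_def)
  have finZ: "finite Z" and finO: "finite On" using ZA OA finA finite_subset by blast+
  have AZO: "A = Z \<union> On" using T01 by (auto simp: A_def Z_def On_def)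
  have cA: "card A = card Z + card On"
    unfolding AZO by (rule card_Un_disjoint[OF finZ finO]) (auto simp: Z_def On_def)
  have c0: "cell 0 v" using v R0 col_pos[of v] by (auto simp: is_cell_def)
  have O0: "0 \<in> On" using c0 Ttop by (auto simp: On_def)
  have Z0: "0 \<notin> Z" using c0 Ttop by (auto simp: Z_def)
  have cO: "card On = card (On - {0}) + 1" using card_Suc_Diff1[OF finO O0] by simp
  have P_eq: "{u \<in> tp t - {0}. adj n R u v} = (A \<inter> tp t) - {0}"
    using v by (auto simp: adj_col A_def)
  have vR: "v \<notin> R" using v by (auto simp: cols_def)
  have cfv: "cf t v = int (card Z) + 1 - (if v \<in> tp t then int (card A) else 0) + int (card ((A \<inter> tp t) - {0}))"
  proof -
    have "cf t v = sink_topple n R cc v - (if v \<in> tp t \<and> v \<noteq> 0 then int (deg n R v) else 0)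
       + int (card {u \<in> tp t - {0}. adj n R u v})" using F unfolding FORM_def by blast
    then show ?thesis unfolding P_eq using v col_pos[of v]
      by (simp add: sink_col cc_def phi_col Z_def deg_col A_def)
  qed
  have degv: "deg n R v = card A" using v by (simp add: deg_col A_def)
  show ?thesis
  proof (cases "v \<in> tp t")
    case True
    have "card Z \<le> card (A - {0})" using ZA Z0 finA by (intro card_mono) auto
    moreover have "card ((A \<inter> tp t) - {0}) \<le> card (A - {0})" using finA by (intro card_mono) auto
    moreover have "card (A - {0}) + 1 = card A" using card_Suc_Diff1[OF finA, of 0] OA O0 by auto
    ultimately show ?thesis using True unfolding cfv degv by auto
  next
    case False
    have PO: "(A \<inter> tp t) - {0} \<subseteq> On - {0}"
    proof
      fix i assume i: "i \<in> (A \<inter> tp t) - {0}"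
      hence "cell i v" "i \<in> tp t" by (auto simp: A_def)
      with I False have "T i v \<noteq> 0" unfolding INV_def by blast
      with T01[OF \<open>cell i v\<close>] have "T i v = 1" by simp
      with \<open>cell i v\<close> i show "i \<in> On - {0}" by (auto simp: On_def)
    qed
    have finO': "finite (On - {0})" using finO by simp
    have "int (card A) \<le> cf t v \<longleftrightarrow> card (On - {0}) \<le> card ((A \<inter> tp t) - {0})"
      using False unfolding cfv cA cO by simp
    also have "\<dots> \<longleftrightarrow> (A \<inter> tp t) - {0} = On - {0}"
      using PO finO' card_seteq card_mono by (metis order_refl)
    also have "\<dots> \<longleftrightarrow> (\<forall>i. cell i v \<and> T i v = 1 \<longrightarrow> i \<in> tp t)"
      using PO zero_tp[of t] by (auto simp: On_def A_def)
    finally show ?thesis using False degv by simp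
  qed
qed


lemma unstable_row:
  assumes I: "INV t" and F: "FORM t" and v: "v \<in> R" and v0: "v \<noteq> 0"
  shows "int (deg n R v) \<le> cf t v \<longleftrightarrow> v \<notin> tp t \<and> (\<forall>k. cell v k \<and> T v k = 0 \<longrightarrow> k \<in> tp t)"
proof -
  define A where "A = {k. cell v k}"
  define Z where "Z = {k. cell v k \<and> T v k = 0}"
  define On where "On = {k. cell v k \<and> T v k = 1}"
  have finA: "finite A" unfolding A_def by (rule fin_cell2)
  have ZA: "Z \<subseteq> A" and OA: "On \<subseteq> A" by (auto simp: A_def Z_def On_def)
  have finZ: "finite Z" and finO: "finite On" using ZA OA finA finite_subset by blast+
  have AZO: "A = Z \<union> On" using T01 by (auto simp: A_def Z_def On_def)
  have cA: "card A = card Z + card On"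
    unfolding AZO by (rule card_Un_disjoint[OF finZ finO]) (auto simp: Z_def On_def)
  obtain z where z: "cell v z" "T v z = 0" using rowzero[OF v v0] by blast
  have zZ: "z \<in> Z" using z by (auto simp: Z_def)
  have P_eq: "{u \<in> tp t - {0}. adj n R u v} = A \<inter> tp t"
    using v by (auto simp: adj_row A_def is_cell_def)
  have cfv: "cf t v = int (card On) - (if v \<in> tp t then int (card A) else 0) + int (card (A \<inter> tp t))"
  proof -
    have "cf t v = sink_topple n R cc v - (if v \<in> tp t \<and> v \<noteq> 0 then int (deg n R v) else 0)
       + int (card {u \<in> tp t - {0}. adj n R u v})" using F unfolding FORM_def by blast
    then show ?thesis unfolding P_eq using v v0
      by (simp add: sink_row cc_def phi_row On_def deg_row A_def)
  qed
  have degv: "deg n R v = card A" using v by (simp add: deg_row A_def)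
  show ?thesis
  proof (cases "v \<in> tp t")
    case True
    have "card On < card A" using OA zZ ZA finA z by (intro psubset_card_mono) (auto simp: On_def)
    moreover have "card (A \<inter> tp t) \<le> card A" using finA by (intro card_mono) auto
    ultimately show ?thesis using True unfolding cfv degv by auto
  next
    case False
    have PZ: "A \<inter> tp t \<subseteq> Z"
    proof
      fix k assume k: "k \<in> A \<inter> tp t"
      hence "cell v k" "k \<in> tp t" by (auto simp: A_def)
      with I False have "T v k \<noteq> 1" unfolding INV_def by blast
      with T01[OF \<open>cell v k\<close>] have "T v k = 0" by simp
      with \<open>cell v k\<close> show "k \<in> Z" by (auto simp: Z_def)
    qed
    have "int (card A) \<le> cf t v \<longleftrightarrow> card Z \<le> card (A \<inter> tp t)"
      using False unfolding cfv cA by simp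
    also have "\<dots> \<longleftrightarrow> A \<inter> tp t = Z"
      using PZ finZ card_seteq card_mono by (metis order_refl)
    also have "\<dots> \<longleftrightarrow> (\<forall>k. cell v k \<and> T v k = 0 \<longrightarrow> k \<in> tp t)"
      using PZ by (auto simp: Z_def A_def)
    finally show ?thesis using False degv by simp
  qed
qed

end

context ewl begin

lemma CH:
  assumes I: "INV t" and F: "FORM t"
  shows "v \<in> blk (Suc t) \<longleftrightarrow> v \<noteq> 0 \<and> v \<notin> tp t \<and>
    (if odd (Suc t) then v \<in> cols n R \<and> (\<forall>i. cell i v \<and> T i v = 1 \<longrightarrow> i \<in> tp t)
     else v \<in> R \<and> (\<forall>k. cell v k \<and> T v k = 0 \<longrightarrow> k \<in> tp t))"
proof (cases "odd (Suc t)")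
  case True
  have "v \<in> blk (Suc t) \<longleftrightarrow> v \<in> cols n R \<and> int (deg n R v) \<le> cf t v"
    using True col_pos[of v] by (auto simp: blkSuc unstable_block_def cols_def)
  also have "\<dots> \<longleftrightarrow> v \<in> cols n R \<and> v \<notin> tp t \<and> (\<forall>i. cell i v \<and> T i v = 1 \<longrightarrow> i \<in> tp t)"
    using unstable_col[OF I F] by blast
  finally show ?thesis using True col_pos[of v] by auto
next
  case False
  have "v \<in> blk (Suc t) \<longleftrightarrow> v \<in> R \<and> v \<noteq> 0 \<and> int (deg n R v) \<le> cf t v"
    using False R_sub by (auto simp: blkSuc unstable_block_def)
  also have "\<dots> \<longleftrightarrow> v \<in> R \<and> v \<noteq> 0 \<and> v \<notin> tp t \<and> (\<forall>k. cell v k \<and> T v k = 0 \<longrightarrow> k \<in> tp t)"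
    using unstable_row[OF I F] by blast
  finally show ?thesis using False by auto
qed

lemma INV_FORM: "INV t \<and> FORM t"
proof (induction t)
  case 0
  have "INV 0"
    unfolding INV_def tp0
  proof (intro conjI allI impI)
    fix i k assume "cell i k" "T i k = 0" "k \<notin> {0}"
    then show "i \<notin> {0}" using Ttop by (metis singletonD zero_neq_one)
  next
    fix i k assume "cell i k" "T i k = 1" "i \<notin> {0}"
    then show "k \<notin> {0}" by (auto simp: is_cell_def)
  qed
  moreover have "FORM 0" unfolding FORM_def tp0 by simp
  ultimately show ?case by simp
next
  case (Suc t)
  then have I: "INV t" and F: "FORM t" by auto
  define B where "B = blk (Suc t)"
  have Bd: "B \<inter> tp t = {}" and B0: "0 \<notin> B" using CH[OF I F] by (auto simp: B_def)
  have tpS: "tp (Suc t) = tp t \<union> B" by (simp add: tpSuc B_def)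
  have finB: "finite B" unfolding B_def using blk_sub[of t] finite_subset by blast
  have "FORM (Suc t)"
    unfolding FORM_def
  proof
    fix w
    have e1: "{v \<in> tp (Suc t) - {0}. adj n R v w} = {v \<in> tp t - {0}. adj n R v w} \<union> {v \<in> B. adj n R v w}"
      using B0 by (auto simp: tpS) (metis gr0I)
    have e2: "card ({v \<in> tp t - {0}. adj n R v w} \<union> {v \<in> B. adj n R v w}) =
       card {v \<in> tp t - {0}. adj n R v w} + card {v \<in> B. adj n R v w}"
      by (rule card_Un_disjoint) (use Bd fin_tp[of t] finB in auto)
    have cfw: "cf t w = sink_topple n R cc w - (if w \<in> tp t \<and> w \<noteq> 0 then int (deg n R w) else 0)
       + int (card {u \<in> tp t - {0}. adj n R u w})" using F unfolding FORM_def by blast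
    have "cf (Suc t) w = cf t w - (if w \<in> B then int (deg n R w) else 0) + int (card {v \<in> B. adj n R v w})"
      by (simp add: topple_set_def blkSuc[symmetric] B_def)
    then show "cf (Suc t) w = sink_topple n R cc w - (if w \<in> tp (Suc t) \<and> w \<noteq> 0 then int (deg n R w) else 0)
       + int (card {v \<in> tp (Suc t) - {0}. adj n R v w})"
      unfolding e1 e2 cfw using Bd B0 by (auto simp: tpS)
  qed
  moreover have "INV (Suc t)"
  proof (cases "odd (Suc t)")
    case True
    have Bc: "B \<subseteq> cols n R" using CH[OF I F] True by (auto simp: B_def)
    show ?thesis unfolding INV_def tpS
    proof (intro conjI allI impI)
      fix i k assume a: "cell i k" "T i k = 0" "k \<notin> tp t \<union> B"
      then have "i \<notin> tp t" using I unfolding INV_def by blast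
      moreover have "i \<notin> B" using Bc a(1) by (auto simp: is_cell_def cols_def)
      ultimately show "i \<notin> tp t \<union> B" by blast
    next
      fix i k assume a: "cell i k" "T i k = 1" "i \<notin> tp t \<union> B"
      then have "k \<notin> tp t" using I unfolding INV_def by blast
      moreover have "k \<notin> B" using CH[OF I F, of k] True a unfolding B_def by auto
      ultimately show "k \<notin> tp t \<union> B" by blast
    qed
  next
    case False
    have Bc: "B \<subseteq> R" using CH[OF I F] False by (auto simp: B_def)
    show ?thesis unfolding INV_def tpS
    proof (intro conjI allI impI)
      fix i k assume a: "cell i k" "T i k = 0" "k \<notin> tp t \<union> B"
      then have "i \<notin> tp t" using I unfolding INV_def by blast
      moreover have "i \<notin> B" using CH[OF I F, of i] False a unfolding B_def by auto
      ultimately show "i \<notin> tp t \<union> B" by blast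
    next
      fix i k assume a: "cell i k" "T i k = 1" "i \<notin> tp t \<union> B"
      then have "k \<notin> tp t" using I unfolding INV_def by blast
      moreover have "k \<notin> B" using Bc a(1) by (auto simp: is_cell_def cols_def)
      ultimately show "k \<notin> tp t \<union> B" by blast
    qed
  qed
  ultimately show ?case by simp
qed

lemma CH': "v \<in> blk (Suc t) \<longleftrightarrow> v \<noteq> 0 \<and> v \<notin> tp t \<and>
    (if odd (Suc t) then v \<in> cols n R \<and> (\<forall>i. cell i v \<and> T i v = 1 \<longrightarrow> i \<in> tp t)
     else v \<in> R \<and> (\<forall>k. cell v k \<and> T v k = 0 \<longrightarrow> k \<in> tp t))"
  using CH INV_FORM by blast

end

context ewl begin

lemma blk_not_tp: "v \<in> blk (Suc t) \<Longrightarrow> v \<notin> tp t" using CH' by blast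

lemma uniq: assumes "v \<in> blk s" "v \<in> blk t" shows "s = t"
proof (rule ccontr)
  assume "s \<noteq> t"
  then consider "s < t" | "t < s" by linarith
  then show False
  proof cases
    case 1
    then obtain t' where t': "t = Suc t'" "s \<le> t'" by (cases t) auto
    then show False using blk_not_tp[of v t'] assms by (auto simp: tp_def)
  next
    case 2
    then obtain s' where s': "s = Suc s'" "t \<le> s'" by (cases s) auto
    then show False using blk_not_tp[of v s'] assms by (auto simp: tp_def)
  qed
qed

abbreviation tau where "tau v \<equiv> block_index n R (phiTC n R T) v"

lemma tau_eq: "v \<in> blk t \<Longrightarrow> tau v = t"
  unfolding block_index_def
  by (rule Least_equality) (use uniq in \<open>auto simp: blk_def cc_def\<close>)

lemma tp_ex: "v \<in> tp t \<Longrightarrow> \<exists>s\<le>t. v \<in> blk s" by (auto simp: tp_def)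

lemma fin_bound: "finite S \<Longrightarrow> (\<forall>x\<in>S. \<exists>t. x \<in> tp t) \<Longrightarrow> \<exists>t. S \<subseteq> tp t"
proof (induction S rule: finite_induct)
  case empty then show ?case by auto
next
  case (insert x F)
  then obtain t1 t2 where "F \<subseteq> tp t1" "x \<in> tp t2" by auto
  then have "insert x F \<subseteq> tp (max t1 t2)" using tp_mono[of t1 "max t1 t2"] tp_mono[of t2 "max t1 t2"] by auto
  then show ?case by blast
qed

definition rel where "rel a d \<longleftrightarrow> (\<exists>x. cell a x \<and> T a x = 0 \<and> cell d x \<and> T d x = 1)"

lemma rel_irrefl: "\<not> rel a a" by (auto simp: rel_def)

lemma shortcut: assumes "rel a b" "rel b d" "a < b" shows "rel a d"
proof -
  obtain x where x: "cell a x" "T a x = 0" "cell b x" "T b x = 1" using assms(1) by (auto simp: rel_def)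
  obtain y where y: "cell b y" "T b y = 0" "cell d y" "T d y = 1" using assms(2) by (auto simp: rel_def)
  have ay: "cell a y" using x y assms(3) by (auto simp: is_cell_def)
  show ?thesis
  proof (cases "T a y = 0")
    case True then show ?thesis using ay y by (auto simp: rel_def)
  next
    case False
    then have ay1: "T a y = 1" using T01[OF ay] by simp
    have xy: "x \<noteq> y" using x y by auto
    have aR: "a \<in> R" "b \<in> R" "x \<in> cols n R" "y \<in> cols n R" "b < x" "b < y"
      using x y by (auto simp: is_cell_def)
    show ?thesis
    proof (cases "x < y")
      case True
      then show ?thesis using rect(1)[of a b x y] aR assms(3) x y ay1 by auto
    next
      case False
      then have "y < x" using xy by simp
      then show ?thesis using rect(2)[of a b y x] aR assms(3) x y ay1 by auto
    qed
  qed
qed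

lemma no_closed: "finite W \<Longrightarrow> (\<forall>a\<in>W. \<exists>d\<in>W. rel a d) \<Longrightarrow> W = {}"
proof (induction "card W" arbitrary: W rule: less_induct)
  case less
  show ?case
  proof (rule ccontr)
    assume ne: "W \<noteq> {}"
    define b where "b = Max W"
    have bW: "b \<in> W" using ne less.prems by (simp add: b_def)
    have bmax: "a \<in> W \<Longrightarrow> a \<le> b" for a using less.prems by (simp add: b_def)
    define W' where "W' = W - {b}"
    have cl: "\<forall>a\<in>W'. \<exists>d\<in>W'. rel a d"
    proof
      fix a assume a: "a \<in> W'"
      then obtain d where d: "d \<in> W" "rel a d" using less.prems by (auto simp: W'_def)
      show "\<exists>d\<in>W'. rel a d"
      proof (cases "d = b")
        case False then show ?thesis using d by (auto simp: W'_def)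
      next
        case True
        obtain d' where d': "d' \<in> W" "rel b d'" using less.prems bW by auto
        have "a < b" using a bmax by (fastforce simp: W'_def)
        then have "rel a d'" using shortcut d True d' by blast
        moreover have "d' \<noteq> b" using d' rel_irrefl by auto
        ultimately show ?thesis using d' by (auto simp: W'_def)
      qed
    qed
    have "card W' < card W" unfolding W'_def by (rule card_Diff1_less[OF less.prems(1) bW])
    then have "W' = {}" using less.hyps[of W'] cl less.prems by (simp add: W'_def)
    then have "W = {b}" using bW by (auto simp: W'_def)
    then show False using less.prems rel_irrefl by auto
  qed
qed

definition Never where "Never = {v. \<forall>t. v \<notin> tp t}"

lemma col_never:
  assumes k: "k \<in> cols n R" and kN: "k \<in> Never"
  shows "\<exists>i. cell i k \<and> T i k = 1 \<and> i \<in> Never"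
proof (rule ccontr)
  assume "\<not> ?thesis"
  then have "\<forall>i\<in>{i. cell i k \<and> T i k = 1}. \<exists>t. i \<in> tp t" by (auto simp: Never_def)
  then obtain t where t: "{i. cell i k \<and> T i k = 1} \<subseteq> tp t"
    using fin_bound[of "{i. cell i k \<and> T i k = 1}"] fin_cell1[of k] by (auto intro: finite_subset)
  have "tp t \<subseteq> tp (2*t)" by (rule tp_mono) simp
  moreover have "k \<notin> tp (2*t)" using kN by (auto simp: Never_def)
  ultimately have "k \<in> blk (Suc (2*t))" using t k col_pos[of k] CH'[of k "2*t"] by auto
  then have "k \<in> tp (Suc (2*t))" by (auto simp: tpSuc)
  then show False using kN by (auto simp: Never_def)
qed

lemma row_never:
  assumes j: "j \<in> R" and jN: "j \<in> Never"
  shows "\<exists>k. cell j k \<and> T j k = 0 \<and> k \<in> Never"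
proof (rule ccontr)
  assume "\<not> ?thesis"
  then have "\<forall>i\<in>{k. cell j k \<and> T j k = 0}. \<exists>t. i \<in> tp t" by (auto simp: Never_def)
  then obtain t where t: "{k. cell j k \<and> T j k = 0} \<subseteq> tp t"
    using fin_bound[of "{k. cell j k \<and> T j k = 0}"] fin_cell2[of j] by (auto intro: finite_subset)
  have "tp t \<subseteq> tp (Suc (2*t))" by (rule tp_mono) simp
  moreover have "j \<notin> tp (Suc (2*t))" using jN by (auto simp: Never_def)
  moreover have "j \<noteq> 0" using jN zero_tp[of 0] unfolding Never_def by (metis mem_Collect_eq)
  ultimately have "j \<in> blk (Suc (Suc (2*t)))" using t j CH'[of j "Suc (2*t)"] by auto
  then have "j \<in> tp (Suc (Suc (2*t)))" by (auto simp: tpSuc)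
  then show False using jN by (auto simp: Never_def)
qed

lemma all_topple: assumes "v \<le> n" shows "\<exists>t. v \<in> blk t"
proof -
  define W where "W = R \<inter> Never"
  have "finite W" using R_sub by (auto simp: W_def intro: finite_subset)
  moreover have "\<forall>a\<in>W. \<exists>d\<in>W. rel a d"
  proof
    fix a assume a: "a \<in> W"
    then obtain x where x: "cell a x" "T a x = 0" "x \<in> Never" using row_never by (auto simp: W_def)
    then obtain d where d: "cell d x" "T d x = 1" "d \<in> Never" using col_never by (auto simp: is_cell_def)
    then show "\<exists>d\<in>W. rel a d" using x by (auto simp: W_def rel_def is_cell_def)
  qed
  ultimately have W0: "W = {}" by (rule no_closed)
  have "v \<notin> Never"
  proof
    assume vN: "v \<in> Never"
    show False
    proof (cases "v \<in> R")
      case True then show False using W0 vN by (auto simp: W_def)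
    next
      case False
      then have "v \<in> cols n R" using assms by (auto simp: cols_def)
      then obtain i where "cell i v" "i \<in> Never" using col_never vN by blast
      then show False using W0 by (auto simp: W_def is_cell_def)
    qed
  qed
  then show ?thesis by (auto simp: Never_def tp_def)
qed

lemma tau_blk: "v \<le> n \<Longrightarrow> v \<in> blk (tau v)"
  using all_topple tau_eq by metis

lemma col_odd: "k \<in> cols n R \<Longrightarrow> odd (tau k)"
proof -
  assume k: "k \<in> cols n R"
  have kb: "k \<in> blk (tau k)" using k tau_blk by (auto simp: cols_def)
  have "tau k \<noteq> 0"
  proof
    assume "tau k = 0" then show False using kb col_pos[OF k] by (simp add: blk0)
  qed
  then obtain s where s: "tau k = Suc s" by (cases "tau k") auto
  then show ?thesis using kb blk_par[of k s] k by (auto simp: cols_def)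
qed

lemma row_even: "j \<in> R \<Longrightarrow> even (tau j)"
proof -
  assume j: "j \<in> R"
  have jb: "j \<in> blk (tau j)" using j R_sub tau_blk by auto
  show ?thesis
  proof (cases "tau j")
    case (Suc s) then show ?thesis using jb blk_par[of j s] j by (auto simp: cols_def)
  qed simp
qed

lemma F1: assumes "cell i k" "T i k = 1" shows "tau i < tau k"
proof -
  have k: "k \<in> cols n R" "i \<in> R" "i < k" using assms by (auto simp: is_cell_def)
  have kb: "k \<in> blk (tau k)" using k tau_blk by (auto simp: cols_def)
  have "tau k \<noteq> 0"
  proof
    assume "tau k = 0" then show False using kb col_pos[OF k(1)] by (simp add: blk0)
  qed
  then obtain s where s: "tau k = Suc s" by (cases "tau k") auto
  have "odd (Suc s)" using col_odd[OF k(1)] s by simp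
  then have "i \<in> tp s" using CH'[of k s] kb s assms by auto
  then obtain s' where "s' \<le> s" "i \<in> blk s'" using tp_ex by blast
  then show ?thesis using tau_eq s by auto
qed

lemma F2: assumes "cell i k" "T i k = 0" shows "tau k < tau i"
proof -
  have k: "k \<in> cols n R" "i \<in> R" "i < k" using assms by (auto simp: is_cell_def)
  have i0: "i \<noteq> 0"
  proof
    assume "i = 0" then show False using assms Ttop by simp
  qed
  have ib: "i \<in> blk (tau i)" using k R_sub tau_blk by auto
  have "tau i \<noteq> 0"
  proof
    assume "tau i = 0" then show False using ib i0 by (simp add: blk0)
  qed
  then obtain s where s: "tau i = Suc s" by (cases "tau i") auto
  have "even (Suc s)" using row_even[OF k(2)] s by simp
  then have "k \<in> tp s" using CH'[of i s] ib s assms by auto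
  then obtain s' where "s' \<le> s" "k \<in> blk s'" using tp_ex by blast
  then show ?thesis using tau_eq s by auto
qed

lemma F3: assumes k: "k \<in> cols n R" and od: "odd (Suc s)"
  and all: "\<forall>i. cell i k \<and> T i k = 1 \<longrightarrow> i \<in> tp s"
  shows "tau k \<le> Suc s"
proof (cases "k \<in> tp s")
  case True
  then obtain s' where "s' \<le> s" "k \<in> blk s'" using tp_ex by blast
  then show ?thesis using tau_eq by auto
next
  case False
  then have "k \<in> blk (Suc s)" using CH'[of k s] k od all col_pos[OF k] by auto
  then show ?thesis using tau_eq by auto
qed

lemma F4: assumes j: "j \<in> R" "j \<noteq> 0"
  shows "\<exists>k'. cell j k' \<and> T j k' = 0 \<and> Suc (tau k') = tau j"
proof -
  have jb: "j \<in> blk (tau j)" using j R_sub tau_blk by auto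
  have "tau j \<noteq> 0"
  proof
    assume "tau j = 0" then show False using jb j by (simp add: blk0)
  qed
  then obtain s where s: "tau j = Suc s" by (cases "tau j") auto
  have ev: "even (Suc s)" using row_even[OF j(1)] s by simp
  then have z: "\<forall>k. cell j k \<and> T j k = 0 \<longrightarrow> k \<in> tp s" and jt: "j \<notin> tp s"
    using CH'[of j s] jb s by auto
  have "s \<noteq> 0" using ev by (metis odd_one One_nat_def)
  then obtain s2 where s2: "s = Suc s2" by (cases s) auto
  have "\<exists>k'. cell j k' \<and> T j k' = 0 \<and> k' \<notin> tp s2"
  proof (rule ccontr)
    assume "\<not> ?thesis"
    then have z2: "\<forall>k. cell j k \<and> T j k = 0 \<longrightarrow> k \<in> tp s2" by blast
    show False
    proof (cases s2)
      case 0
      obtain z where "cell j z" "T j z = 0" using rowzero j by blast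
      then show False using z2 0 by (auto simp: tp0 is_cell_def)
    next
      case (Suc s3)
      have "j \<notin> tp s3" using jt tp_mono[of s3 s] s2 Suc by auto
      moreover have ev3: "even (Suc s3)" using ev s2 Suc by simp
      moreover have "\<forall>k. cell j k \<and> T j k = 0 \<longrightarrow> k \<in> tp s3"
      proof (intro allI impI)
        fix k assume kk: "cell j k \<and> T j k = 0"
        then have "k \<in> tp (Suc s3)" using z2 Suc by simp
        moreover have "k \<notin> R" using kk by (auto simp: is_cell_def cols_def)
        then have "k \<notin> blk (Suc s3)" using blk_par[of k s3] ev3 by auto
        ultimately show "k \<in> tp s3" by (auto simp: tpSuc)
      qed
      ultimately have "j \<in> blk (Suc s3)" using CH'[of j s3] j by auto
      then have "tau j = Suc s3" by (rule tau_eq)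
      then show False using s s2 Suc by simp
    qed
  qed
  then obtain k' where k': "cell j k'" "T j k' = 0" "k' \<notin> tp s2" by blast
  then have "k' \<in> blk s" using z s2 by (auto simp: tpSuc)
  then have "tau k' = s" by (rule tau_eq)
  then show ?thesis using k' s by auto
qed

end

context ewl begin

lemma main:
  assumes j: "j \<in> R" and k: "k \<in> cols n R" and jk: "j > k"
  shows "supp_tab n R T j k =
           (if \<exists>k' \<in> cols n R. k' > j \<and> T j k' = 0 \<and>
                  (\<forall>j' \<in> R. j' < k \<longrightarrow> T j' k' = 0 \<longrightarrow> T j' k = 0)
            then 0 else 1)"
proof -
  have st: "supp_tab n R T j k = (if tau j < tau k then 1 else 0)" by (simp add: supp_tab_def)
  show ?thesis
  proof (cases "\<exists>k' \<in> cols n R. k' > j \<and> T j k' = 0 \<and>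
                  (\<forall>j' \<in> R. j' < k \<longrightarrow> T j' k' = 0 \<longrightarrow> T j' k = 0)")
    case True
    then obtain k' where k': "k' \<in> cols n R" "k' > j" "T j k' = 0"
      and imp: "\<forall>j' \<in> R. j' < k \<longrightarrow> T j' k' = 0 \<longrightarrow> T j' k = 0" by blast
    have cjk': "cell j k'" using j k' by (auto simp: is_cell_def)
    have lt: "tau k' < tau j" using F2[OF cjk' k'(3)] .
    have "tau k' \<noteq> 0" using col_odd[OF k'(1)] by (metis even_zero)
    then obtain s where s: "tau k' = Suc s" by (cases "tau k'") auto
    have "tau k \<le> Suc s"
    proof (rule F3[OF k])
      show "odd (Suc s)" using col_odd[OF k'(1)] s by simp
      show "\<forall>i. cell i k \<and> T i k = 1 \<longrightarrow> i \<in> tp s"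
      proof (intro allI impI)
        fix i assume i: "cell i k \<and> T i k = 1"
        then have iR: "i \<in> R" "i < k" by (auto simp: is_cell_def)
        have cik': "cell i k'" using iR k' jk by (auto simp: is_cell_def)
        have "T i k' \<noteq> 0" using imp iR i by auto
        then have "T i k' = 1" using T01[OF cik'] by simp
        then have "tau i < Suc s" using F1[OF cik'] s by simp
        moreover have "i \<in> blk (tau i)" using iR R_sub tau_blk by auto
        ultimately show "i \<in> tp s" unfolding tp_def using less_Suc_eq_le by blast
      qed
    qed
    then have "\<not> tau j < tau k" using lt s by simp
    then show ?thesis using True st by simp
  next
    case False
    have "tau j < tau k"
    proof (rule ccontr)
      assume "\<not> tau j < tau k"
      then have le: "tau k \<le> tau j" by simp
      have j0: "j \<noteq> 0" using jk by simp
      obtain k' where k': "cell j k'" "T j k' = 0" "Suc (tau k') = tau j" using F4[OF j j0] by blast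
      have "tau k \<noteq> tau j" using col_odd[OF k] row_even[OF j] by metis
      then have le2: "tau k \<le> tau k'" using le k'(3) by simp
      have k'c: "k' \<in> cols n R" "k' > j" using k' by (auto simp: is_cell_def)
      then obtain j' where j': "j' \<in> R" "j' < k" "T j' k' = 0" "T j' k \<noteq> 0"
        using False k'(2) by blast
      have cj'k: "cell j' k" using j' k by (auto simp: is_cell_def)
      have cj'k': "cell j' k'" using j' k'c jk by (auto simp: is_cell_def)
      have "T j' k = 1" using T01[OF cj'k] j'(4) by simp
      then have "tau j' < tau k" using F1[OF cj'k] by simp
      moreover have "tau k' < tau j'" using F2[OF cj'k' j'(3)] .
      ultimately show False using le2 by simp
    qed
    then show ?thesis using False st by simp
  qed
qed

end

theorem proposition4p15:
  fixes n :: nat and R :: "nat set" and T :: "nat \<Rightarrow> nat \<Rightarrow> nat" and j k :: nat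
  assumes "ferrers n R"
    and "T \<in> EWtab n R"
    and "j \<in> R" and "k \<in> cols n R" and "j > k"
  shows "supp_tab n R T j k =
           (if \<exists>k' \<in> cols n R. k' > j \<and> T j k' = 0 \<and>
                  (\<forall>j' \<in> R. j' < k \<longrightarrow> T j' k' = 0 \<longrightarrow> T j' k = 0)
            then 0 else 1)"
proof -
  interpret ewl n R T using assms(1,2) by unfold_locales
  show ?thesis using main assms(3-5) by blast
qed


end
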